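(* Let $q$ be a prime power and let $\mathcal{F}=(\mathcal{F}_1,\ldots,\mathcal{F}_r)$ be a flag of type $(t_1,\ldots,t_r)$ on $\mathbb{F}_{q^n}$. Assume $m$ is a divisor of $n$ with $m=t_i$ for some $i\in\{1,\ldots,r\}$, and let $\beta\in\mathbb{F}_{q^n}^*$ be such that $\mathbb{F}_{q^m}^*\subseteq\langle\beta\rangle$. Then: (1) $\frac{|\beta|}{q^m-1}$ divides $|\mathrm{Orb}_\beta(\mathcal{F})|$; (2) $|\mathrm{Orb}_\beta(\mathcal{F})|=\frac{|\beta|}{q^m-1}$ if and only if every subspace $\mathcal{F}_j$ ($1\le j\le r$) is a vector space over $\mathbb{F}_{q^m}$; in particular, if this equality holds, then $t_1=m$.
   Context: $\mathbb{F}_{q^n}$ is regarded as an $\mathbb{F}_q$-vector space. A flag of type $(t_1,\ldots,t_r)$ on $\mathbb{F}_{q^n}$ is a sequence $(\mathcal{F}_1,\ldots,\mathcal{F}_r)$ of $\mathbb{F}_q$-subspaces with $\{0\}\subsetneq\mathcal{F}_1\subsetneq\cdots\subsetneq\mathcal{F}_r\subsetneq\mathbb{F}_{q^n}$ and $\dim_{\mathbb{F}_q}\mathcal{F}_i=t_i$. For $\beta\in\mathbb{F}_{q^n}^*$, $|\beta|$ is its multiplicative order, $\mathcal{F}\beta=(\mathcal{F}_1\beta,\ldots,\mathcal{F}_r\beta)$ where $\mathcal{U}\beta=\{u\beta:u\in\mathcal{U}\}$, and $\mathrm{Orb}_\beta(\mathcal{F})=\{\mathcal{F}\beta^j:0\le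 j\le|\beta|-1\}$. *)

theory Defs
  imports "HOL-Algebra.Algebra" "HOL-Computational_Algebra.Primes"
begin

definition is_flag :: "('a, 'b) ring_scheme \<Rightarrow> 'a set \<Rightarrow> 'a set list \<Rightarrow> nat list \<Rightarrow> bool" where
  "is_flag R K F ts \<longleftrightarrow>
     length F = length ts \<and>
     (\<forall>i < length F. subalgebra K (F ! i) R \<and> ring.dimension R (ts ! i) K (F ! i)) \<and>
     (F \<noteq> [] \<longrightarrow> {\<zero>\<^bsub>R\<^esub>} \<subset> hd F \<and> last F \<subset> carrier R) \<and>
     (\<forall>i. Suc i < length F \<longrightarrow> F ! i \<subset> F ! Suc i)"

definition elem_ord :: "('a, 'b) ring_scheme \<Rightarrow> 'a \<Rightarrow> nat" where
  "elem_ord R b = group.ord (units_of R) b"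

definition flag_mult :: "('a, 'b) ring_scheme \<Rightarrow> 'a set list \<Rightarrow> 'a \<Rightarrow> 'a set list" where
  "flag_mult R F b = map (\<lambda>U. (\<lambda>u. u \<otimes>\<^bsub>R\<^esub> b) ` U) F"

definition flag_orbit :: "('a, 'b) ring_scheme \<Rightarrow> 'a \<Rightarrow> 'a set list \<Rightarrow> 'a set list set" where
  "flag_orbit R b F = {flag_mult R F (b [^]\<^bsub>R\<^esub> j) | j::nat. j < elem_ord R b}"

end

theory Submission
  imports Defs
begin

lemma (in domain) finprod_nonzero:
  "finite A \<Longrightarrow> A \<subseteq> carrier R - {\<zero>} \<Longrightarrow> finprod R (\<lambda>x. x) A \<noteq> \<zero>"
proof (induct A rule: finite_induct)
  case empty then show ?case by simp
next
  case (insert a A)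
  then have "finprod R (\<lambda>x. x) (insert a A) = a \<otimes> finprod R (\<lambda>x. x) A"
    by (subst finprod_insert) auto
  moreover have "finprod R (\<lambda>x. x) A \<in> carrier R" using insert by (intro finprod_closed) auto
  ultimately show ?case using insert integral_iff by auto
qed

lemma (in domain) stab_pow:
  assumes fin: "finite V" and sub: "V \<subseteq> carrier R" and z: "\<zero> \<in> V"
    and g: "\<gamma> \<in> carrier R" "\<gamma> \<noteq> \<zero>" and st: "(\<lambda>u. u \<otimes> \<gamma>) ` V = V"
  shows "\<gamma> [^] (card V - 1) = \<one>"
proof -
  define V' where "V' = V - {\<zero>}"
  define h where "h = (\<lambda>u. u \<otimes> \<gamma>)"
  have inj: "inj_on h V'" unfolding inj_on_def h_def V'_def
  proof (intro ballI impI)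
    fix x y assume "x \<in> V - {\<zero>}" "y \<in> V - {\<zero>}" "x \<otimes> \<gamma> = y \<otimes> \<gamma>"
    then show "x = y" using m_rcancel[OF g(2) g(1)] sub by auto
  qed
  have hV: "h ` V' = V'"
  proof
    show "h ` V' \<subseteq> V'"
    proof
      fix y assume "y \<in> h ` V'"
      then obtain x where x: "x \<in> V" "x \<noteq> \<zero>" "y = x \<otimes> \<gamma>" unfolding h_def V'_def by auto
      then have "y \<in> V" using st by blast
      moreover have "y \<noteq> \<zero>" using x g sub integral_iff by auto
      ultimately show "y \<in> V'" unfolding V'_def by simp
    qed
    show "V' \<subseteq> h ` V'"
    proof
      fix y assume y: "y \<in> V'"
      then obtain x where x: "x \<in> V" "y = x \<otimes> \<gamma>" using st unfolding V'_def by blast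
      then have "x \<noteq> \<zero>" using y sub g unfolding V'_def by auto
      then show "y \<in> h ` V'" using x unfolding h_def V'_def by auto
    qed
  qed
  have V'c: "V' \<subseteq> carrier R" using sub V'_def by auto
  define P where "P = finprod R (\<lambda>x. x) V'"
  have Pc: "P \<in> carrier R" unfolding P_def using V'c by (intro finprod_closed) auto
  have Pnz: "P \<noteq> \<zero>" unfolding P_def using fin V'c V'_def by (intro finprod_nonzero) auto
  have "P = finprod R (\<lambda>x. x) (h ` V')" using hV P_def by simp
  also have "\<dots> = finprod R (\<lambda>x. h x) V'"
    using V'c hV inj by (subst finprod_reindex) auto
  also have "\<dots> = P \<otimes> finprod R (\<lambda>x. \<gamma>) V'" unfolding h_def P_def
    using V'c g by (subst finprod_multf) auto
  also have "\<dots> = P \<otimes> \<gamma> [^] card V'" using finprod_const[OF g(1), of V'] by simp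
  finally have "P \<otimes> \<one> = P \<otimes> \<gamma> [^] card V'" using Pc by simp
  then have "\<gamma> [^] card V' = \<one>" using m_lcancel[OF Pnz Pc] g by simp
  moreover have "card V' = card V - 1" unfolding V'_def using fin z by simp
  ultimately show ?thesis by simp
qed

lemma (in cring) card_dimension_aux:
  assumes K: "subfield K R" and finK: "finite K" and d: "dimension n K' E" and KK: "K' = K"
  shows "card E = card K ^ n"
  using d KK
proof (induct n K' E rule: dimension.induct)
  case (zero_dim K) then show ?case by simp
next
  case (Suc_dim v E n K')
  have vc: "v \<in> carrier R" and vE: "v \<notin> E" and dE: "dimension n K E" using Suc_dim by auto
  have IH: "card E = card K ^ n" using Suc_dim by auto
  have Kc: "K \<subseteq> carrier R" using K subfieldE(3) by auto
  have Ec: "E \<subseteq> carrier R" using space_subgroup_props(1)[OF K dE] .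
  have eq: "line_extension K v E = (\<lambda>(k,e). k \<otimes> v \<oplus> e) ` (K \<times> E)"
  proof (intro Set.set_eqI iffI)
    fix u assume "u \<in> line_extension K v E"
    then obtain k e where "k \<in> K" "e \<in> E" "u = k \<otimes> v \<oplus> e" unfolding line_extension_mem_iff by blast
    then show "u \<in> (\<lambda>(k,e). k \<otimes> v \<oplus> e) ` (K \<times> E)" by force
  next
    fix u assume "u \<in> (\<lambda>(k,e). k \<otimes> v \<oplus> e) ` (K \<times> E)"
    then show "u \<in> line_extension K v E" unfolding line_extension_mem_iff by force
  qed
  have inj: "inj_on (\<lambda>(k,e). k \<otimes> v \<oplus> e) (K \<times> E)"
  proof (rule inj_onI, clarsimp)
    fix k e k' e' assume k: "k \<in> K" "e \<in> E" "k' \<in> K" "e' \<in> E" and h: "k \<otimes> v \<oplus> e = k' \<otimes> v \<oplus> e'"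
    have kc: "k \<in> carrier R" "k' \<in> carrier R" "e \<in> carrier R" "e' \<in> carrier R" using k Kc Ec by auto
    have h2: "(k \<ominus> k') \<otimes> v = e' \<ominus> e"
    proof -
      have "(k \<ominus> k') \<otimes> v = (k \<otimes> v \<oplus> e) \<ominus> (k' \<otimes> v \<oplus> e) " using kc vc by algebra
      also have "\<dots> = (k' \<otimes> v \<oplus> e') \<ominus> (k' \<otimes> v \<oplus> e)" using h by simp
      also have "\<dots> = e' \<ominus> e" using kc vc by algebra
      finally show ?thesis .
    qed
    have "e' \<ominus> e \<in> E" using space_subgroup_props(3,4)[OF K dE] k unfolding a_minus_def by auto
    show "k = k' \<and> e = e'"
    proof (cases "k = k'")
      case True
      then show ?thesis using h kc vc by simp
    next
      case False
      then have "k \<ominus> k' \<in> K - {\<zero>}" using k kc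
        using subringE(5,7)[OF subfieldE(1)[OF K]] r_right_minus_eq[of k k'] unfolding a_minus_def by auto
      then have "v \<in> E" using space_subgroup_props(6)[OF K dE _ vc] h2 \<open>e' \<ominus> e \<in> E\<close> by auto
      then show ?thesis using vE by simp
    qed
  qed
  have "card (line_extension K v E) = card (K \<times> E)" unfolding eq using inj card_image by blast
  also have "\<dots> = card K * card E" by (simp add: card_cartesian_product)
  finally show ?case using IH Suc_dim by simp
qed


lemma (in field) main_prop:
  fixes K L :: "'a set"
    and q n m :: nat and F :: "'a set list" and ts :: "nat list" and \<beta> :: 'a
  assumes fin: "finite (carrier R)"
    and K_sub: "subfield K R" and card_K: "card K = q"
    and flag: "is_flag R K F ts"
    and m_type: "\<exists>i < length ts. ts ! i = m"
    and L_sub: "subfield L R" and card_L: "card L = q ^ m"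
    and beta: "\<beta> \<in> carrier R" "\<beta> \<noteq> \<zero>"
    and gen: "L - {\<zero>} \<subseteq> {\<beta> [^] (k::nat) | k. True}"
  shows "elem_ord R \<beta> div (q ^ m - 1) dvd card (flag_orbit R \<beta> F)
         \<and> (card (flag_orbit R \<beta> F) = elem_ord R \<beta> div (q ^ m - 1)
              \<longleftrightarrow> (\<forall>j < length F. subalgebra L (F ! j) R))
         \<and> (card (flag_orbit R \<beta> F) = elem_ord R \<beta> div (q ^ m - 1) \<longrightarrow> ts ! 0 = m)"
proof -
  define e where "e = q ^ m - 1"
  define N where "N = elem_ord R \<beta>"
  have grp: "group (units_of R)" by (rule units_group)
  have bUnits: "\<beta> \<in> Units R" using beta field_Units by auto
  have bU: "\<beta> \<in> carrier (units_of R)" using bUnits units_of_carrier[of R] by auto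
  have pow1: "\<beta> [^] (n::nat) = \<one> \<longleftrightarrow> N dvd n" for n
  proof -
    have "\<beta> [^]\<^bsub>units_of R\<^esub> n = \<beta> [^] n" by (rule units_of_pow[OF bUnits])
    then show ?thesis using group.pow_eq_id[OF grp bU, of n] units_of_one[of R]
      unfolding N_def elem_ord_def by metis
  qed
  have finU: "finite (carrier (units_of R))"
  proof -
    have "carrier (units_of R) \<subseteq> carrier R" using units_of_carrier[of R] field_Units by auto
    then show ?thesis using fin finite_subset by blast
  qed
  have Npos: "N \<ge> 1" using group.ord_ge_1[OF grp finU bU] unfolding N_def elem_ord_def .
  have powc: "\<beta> [^] (n::nat) \<in> carrier R" for n using beta by simp
  have pownz: "\<beta> [^] (n::nat) \<noteq> \<zero>" for n
  proof -
    have "\<beta> [^] n \<in> Units R" using bUnits by (rule Units_pow_closed)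
    then show ?thesis using field_Units by auto
  qed
  have pow_mod: "\<beta> [^] a = \<beta> [^] (a mod N)" for a :: nat
  proof -
    have "\<beta> [^] a = \<beta> [^] (N * (a div N) + a mod N)" by simp
    also have "\<dots> = (\<beta> [^] N) [^] (a div N) \<otimes> \<beta> [^] (a mod N)"
      using beta by (simp add: nat_pow_mult nat_pow_pow)
    also have "\<dots> = \<beta> [^] (a mod N)" using pow1[of N] powc by simp
    finally show ?thesis .
  qed
  have lenF: "length F = length ts" using flag unfolding is_flag_def by simp
  have subK: "\<And>i. i < length F \<Longrightarrow> subalgebra K (F ! i) R"
    and dimK: "\<And>i. i < length F \<Longrightarrow> dimension (ts ! i) K (F ! i)"
    using flag unfolding is_flag_def by auto
  have Fcarr: "\<And>i. i < length F \<Longrightarrow> F ! i \<subseteq> carrier R"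
    using subK subalgebra_in_carrier by blast
  have Fcarr': "\<And>U. U \<in> set F \<Longrightarrow> U \<subseteq> carrier R"
    using Fcarr by (metis in_set_conv_nth)
  have finF: "\<And>i. i < length F \<Longrightarrow> finite (F ! i)" using Fcarr fin finite_subset by blast
  have zeroF: "\<And>i. i < length F \<Longrightarrow> \<zero> \<in> F ! i"
    using space_subgroup_props(2)[OF K_sub dimK] by blast
  define Fm where "Fm j = flag_mult R F (\<beta> [^] (j::nat))" for j
  have Fm_len: "length (Fm j) = length F" for j unfolding Fm_def flag_mult_def by simp
  have Fm_nth: "\<And>i. i < length F \<Longrightarrow> Fm j ! i = (\<lambda>u. u \<otimes> \<beta> [^] j) ` (F ! i)" for j
    unfolding Fm_def flag_mult_def by simp
  have Fm_add: "Fm (a + b) = flag_mult R (Fm a) (\<beta> [^] b)" for a b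
    unfolding Fm_def flag_mult_def map_map
  proof (rule map_cong[OF refl])
    fix U assume "U \<in> set F"
    then have Uc: "U \<subseteq> carrier R" by (rule Fcarr')
    show "(\<lambda>u. u \<otimes> \<beta> [^] (a + b)) ` U = ((\<lambda>U. (\<lambda>u. u \<otimes> \<beta> [^] b) ` U) \<circ> (\<lambda>U. (\<lambda>u. u \<otimes> \<beta> [^] a) ` U)) U"
      unfolding o_def image_image
      using Uc beta by (intro image_cong refl) (auto simp: nat_pow_mult m_assoc)
  qed
  have Fm0: "Fm 0 = F" unfolding Fm_def flag_mult_def
    by (rule map_idI) (use Fcarr' in force)
  have Fm_mod: "Fm a = Fm (a mod N)" for a unfolding Fm_def using pow_mod by metis
  have FmN: "Fm N = F" using Fm_mod[of N] Fm0 by simp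
  have Fm_shift: "Fm a = F \<Longrightarrow> Fm (a + b) = Fm b" for a b
    using Fm_add[of a b] unfolding Fm_def by simp
  have Fm_cancel: "Fm (a + c) = Fm (b + c) \<Longrightarrow> Fm a = Fm b" for a b c
  proof -
    assume h: "Fm (a + c) = Fm (b + c)"
    define c' where "c' = N * c - c"
    have cc: "c + c' = N * c"
    proof -
      have "c \<le> N * c" using Npos by simp
      then show ?thesis unfolding c'_def by simp
    qed
    have key: "Fm x = flag_mult R (Fm (x + c)) (\<beta> [^] c')" for x
    proof -
      have "flag_mult R (Fm (x + c)) (\<beta> [^] c') = Fm (x + c + c')" using Fm_add by simp
      also have "x + c + c' = x + N * c" using cc by simp
      also have "Fm (x + N * c) = Fm x" using Fm_mod[of "x + N * c"] Fm_mod[of x] by simp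
      finally show ?thesis by simp
    qed
    show ?thesis using key[of a] key[of b] h by simp
  qed
  define d where "d = (LEAST j. 0 < j \<and> Fm j = F)"
  have dprop: "0 < d \<and> Fm d = F" unfolding d_def
    by (rule LeastI[of _ N]) (use Npos FmN in auto)
  have dmin: "\<And>j. 0 < j \<Longrightarrow> j < d \<Longrightarrow> Fm j \<noteq> F"
    unfolding d_def using not_less_Least by blast
  have Fm_dmult: "Fm (d * k) = F" for k
  proof (induct k)
    case 0 then show ?case using Fm0 by simp
  next
    case (Suc k)
    have "Fm (d * Suc k) = Fm (d + d * k)" by simp
    also have "\<dots> = Fm (d * k)" using Fm_shift dprop by blast
    finally show ?case using Suc by simp
  qed
  have Fm_red: "Fm j = Fm (j mod d)" for j
  proof -
    have "Fm j = Fm (d * (j div d) + j mod d)" by simp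
    also have "\<dots> = Fm (j mod d)" using Fm_shift Fm_dmult by blast
    finally show ?thesis .
  qed
  have stab_iff: "Fm j = F \<longleftrightarrow> d dvd j" for j
  proof
    assume "Fm j = F"
    then have "Fm (j mod d) = F" using Fm_red by simp
    moreover have "j mod d < d" using dprop by simp
    ultimately have "j mod d = 0" using dmin by blast
    then show "d dvd j" by auto
  next
    assume "d dvd j" then show "Fm j = F" using Fm_dmult by auto
  qed
  have dN: "d dvd N" using stab_iff FmN by simp
  have orb: "flag_orbit R \<beta> F = Fm ` {..<N}"
    unfolding flag_orbit_def Fm_def N_def by auto
  have orb2: "Fm ` {..<N} = Fm ` {..<d}"
  proof
    show "Fm ` {..<N} \<subseteq> Fm ` {..<d}"
    proof
      fix Y assume "Y \<in> Fm ` {..<N}"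
      then obtain j where "Y = Fm j" by auto
      then have "Y = Fm (j mod d)" using Fm_red by simp
      moreover have "j mod d < d" using dprop by simp
      ultimately show "Y \<in> Fm ` {..<d}" by auto
    qed
    have "d \<le> N" using dN Npos by (simp add: dvd_imp_le)
    then show "Fm ` {..<d} \<subseteq> Fm ` {..<N}" by auto
  qed
  have injFm: "inj_on Fm {..<d}"
  proof -
    have *: "a = b" if "a < d" "b < a" "Fm a = Fm b" for a b
    proof -
      have "Fm ((a - b) + b) = Fm (0 + b)" using that by simp
      then have "Fm (a - b) = F" using Fm_cancel Fm0 by metis
      then show ?thesis using dmin[of "a - b"] that by auto
    qed
    show ?thesis
    proof (rule inj_onI)
      fix a b assume "a \<in> {..<d}" "b \<in> {..<d}" "Fm a = Fm b"
      then show "a = b" using *[of a b] *[of b a] by (cases a b rule: linorder_cases) auto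
    qed
  qed
  have card_orb: "card (flag_orbit R \<beta> F) = d"
    using orb orb2 card_image[OF injFm] by simp
  have Lc: "L \<subseteq> carrier R" using L_sub subfieldE(3) by blast
  have finL: "finite L" using Lc fin finite_subset by blast
  have L0: "\<zero> \<in> L" and L1: "\<one> \<in> L"
    using subringE(2,3)[OF subfieldE(1)[OF L_sub]] by auto
  have Lmult: "\<And>x y. x \<in> L \<Longrightarrow> y \<in> L \<Longrightarrow> x \<otimes> y \<in> L"
    using subringE(6)[OF subfieldE(1)[OF L_sub]] by auto
  have Kc: "K \<subseteq> carrier R" using K_sub subfieldE(3) by blast
  have finK: "finite K" using Kc fin finite_subset by blast
  have "{\<zero>, \<one>} \<subseteq> K" using subringE(2,3)[OF subfieldE(1)[OF K_sub]] by auto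
  then have "card {\<zero>, \<one>} \<le> card K" using finK card_mono by blast
  then have q2: "q \<ge> 2" using card_K by simp
  have "card {\<zero>, \<one>} \<le> card L" using L0 L1 finL card_mono by (metis empty_subsetI insert_subset)
  then have "card L \<ge> 2" by simp
  then have epos: "e \<ge> 1" unfolding e_def using card_L by simp
  have cardLs: "card (L - {\<zero>}) = e" unfolding e_def using card_L L0 finL by simp
  have Lpow: "x [^] e = \<one>" if x: "x \<in> L - {\<zero>}" for x
  proof -
    have xc: "x \<in> carrier R" "x \<noteq> \<zero>" using x Lc by auto
    have "(\<lambda>u. u \<otimes> x) ` L = L"
    proof (rule endo_inj_surj[OF finL])
      show "(\<lambda>u. u \<otimes> x) ` L \<subseteq> L" using Lmult x by auto
      show "inj_on (\<lambda>u. u \<otimes> x) L"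
        by (rule inj_onI) (use m_rcancel[OF xc(2) xc(1)] Lc in auto)
    qed
    from stab_pow[OF finL Lc L0 xc this] show ?thesis
      using card_L unfolding e_def by simp
  qed
  define g where "g = gcd N e"
  define N' where "N' = N div g"
  define e' where "e' = e div g"
  have gpos: "g > 0" unfolding g_def using Npos by simp
  have NN': "N = N' * g" unfolding N'_def g_def by simp
  have ee': "e = e' * g" unfolding e'_def g_def by simp
  have cop: "coprime N' e'" unfolding N'_def e'_def g_def
    using Npos by (intro div_gcd_coprime) auto
  have pow_red: "\<beta> [^] (N' * t) = \<beta> [^] (N' * (t mod g))" for t
  proof -
    have "N' * t = N * (t div g) + N' * (t mod g)"
      unfolding NN' by (metis add_mult_distrib2 mult.assoc mult.commute div_mult_mod_eq)
    then have "(N' * t) mod N = (N' * (t mod g)) mod N" by simp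
    then show ?thesis using pow_mod by metis
  qed
  have Lsub: "L - {\<zero>} \<subseteq> (\<lambda>i. \<beta> [^] (N' * i)) ` {..<g}"
  proof
    fix x assume x: "x \<in> L - {\<zero>}"
    then obtain k where k: "x = \<beta> [^] (k::nat)" using gen by auto
    have "\<beta> [^] (k * e) = \<one>" using Lpow[OF x] k beta by (simp add: nat_pow_pow)
    then have "N dvd k * e" using pow1 by simp
    then have "N' * g dvd (k * e') * g" unfolding NN' ee' by (simp add: mult.assoc)
    then have "N' dvd k * e'" using gpos by simp
    then have "N' dvd k" using cop by (simp add: coprime_dvd_mult_left_iff)
    then obtain t where t: "k = N' * t" by auto
    have "x = \<beta> [^] (N' * (t mod g))" using k t pow_red by simp
    moreover have "t mod g < g" using gpos by simp
    ultimately show "x \<in> (\<lambda>i. \<beta> [^] (N' * i)) ` {..<g}" by auto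
  qed
  have "e \<le> g"
  proof -
    have "card (L - {\<zero>}) \<le> card ((\<lambda>i. \<beta> [^] (N' * i)) ` {..<g})"
      using Lsub by (intro card_mono) auto
    also have "\<dots> \<le> g" using card_image_le[of "{..<g}"] by simp
    finally show ?thesis using cardLs by simp
  qed
  moreover have "g \<le> e" unfolding g_def using epos by (simp add: gcd_le2_nat)
  ultimately have ge: "g = e" by simp
  define c where "c = N div e"
  have eN: "e dvd N" using ge unfolding g_def by (metis gcd_dvd1)
  have Nce: "N = c * e" unfolding c_def using eN by simp
  have cN': "N' = c" unfolding N'_def c_def ge ..
  have Leq: "L - {\<zero>} = (\<lambda>i. \<beta> [^] (c * i)) ` {..<e}"
  proof (rule card_seteq)
    show "finite ((\<lambda>i. \<beta> [^] (c * i)) ` {..<e})" by simp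
    show "L - {\<zero>} \<subseteq> (\<lambda>i. \<beta> [^] (c * i)) ` {..<e}" using Lsub unfolding cN' ge .
    show "card ((\<lambda>i. \<beta> [^] (c * i)) ` {..<e}) \<le> card (L - {\<zero>})"
      using card_image_le[of "{..<e}" "\<lambda>i. \<beta> [^] (c * i)"] cardLs by simp
  qed
  have Lall: "\<beta> [^] (c * i) \<in> L - {\<zero>}" for i
  proof -
    have "\<beta> [^] (c * i) = \<beta> [^] (c * (i mod e))" using pow_red[of i] unfolding cN' ge .
    moreover have "i mod e < e" using epos by simp
    ultimately show ?thesis using Leq by auto
  qed
  obtain i0 where i0: "i0 < length ts" "ts ! i0 = m" using m_type by auto
  have i0F: "i0 < length F" using i0 lenF by simp
  have cardF: "\<And>i. i < length F \<Longrightarrow> card (F ! i) = q ^ (ts ! i)"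
    using card_dimension_aux[OF K_sub finK dimK refl] card_K by simp
  have stabF: "\<And>j i. Fm j = F \<Longrightarrow> i < length F \<Longrightarrow> (\<lambda>u. u \<otimes> \<beta> [^] j) ` (F ! i) = F ! i"
    using Fm_nth by metis
  have "(\<beta> [^] d) [^] (card (F ! i0) - 1) = \<one>"
    by (rule stab_pow[OF finF[OF i0F] Fcarr[OF i0F] zeroF[OF i0F] powc pownz stabF[OF conjunct2[OF dprop] i0F]])
  then have "\<beta> [^] (d * e) = \<one>" using cardF[OF i0F] i0 beta unfolding e_def by (simp add: nat_pow_pow)
  then have "c * e dvd d * e" using pow1 Nce by simp
  then have cd: "c dvd d" using epos by simp
  have P2: "d = c \<longleftrightarrow> (\<forall>j < length F. subalgebra L (F ! j) R)"
  proof
    assume dc: "d = c"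
    show "\<forall>j < length F. subalgebra L (F ! j) R"
    proof (intro allI impI)
      fix j assume j: "j < length F"
      have sg: "subgroup (F ! j) (add_monoid R)" using subalgebra.axioms(1)[OF subK[OF j]] .
      show "subalgebra L (F ! j) R"
      proof (rule subalgebra.intro[OF sg], unfold_locales)
        fix l v assume l: "l \<in> L" and v: "v \<in> F ! j"
        have vc: "v \<in> carrier R" using v Fcarr[OF j] by auto
        show "l \<otimes> v \<in> F ! j"
        proof (cases "l = \<zero>")
          case True then show ?thesis using vc zeroF[OF j] by simp
        next
          case False
          then obtain i where li: "l = \<beta> [^] (c * i)" using Leq l by auto
          have "Fm (c * i) = F" using stab_iff dc by simp
          then have "v \<otimes> l \<in> F ! j" using stabF[of "c * i" j] j v li by blast
          then show ?thesis using m_comm[OF vc] li powc by simp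
        qed
      qed
    qed
  next
    assume all: "\<forall>j < length F. subalgebra L (F ! j) R"
    have "Fm c = F"
    proof (rule nth_equalityI)
      show "length (Fm c) = length F" by (rule Fm_len)
      fix j assume "j < length (Fm c)"
      then have j: "j < length F" using Fm_len by simp
      have "(\<lambda>u. u \<otimes> \<beta> [^] c) ` (F ! j) = F ! j"
      proof (rule endo_inj_surj[OF finF[OF j]])
        have bcL: "\<beta> [^] c \<in> L" using Lall[of 1] by simp
        show "(\<lambda>u. u \<otimes> \<beta> [^] c) ` (F ! j) \<subseteq> F ! j"
        proof
          fix w assume "w \<in> (\<lambda>u. u \<otimes> \<beta> [^] c) ` (F ! j)"
          then obtain u where u: "u \<in> F ! j" "w = u \<otimes> \<beta> [^] c" by auto
          have "\<beta> [^] c \<otimes> u \<in> F ! j"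
            using subalgebra.smult_closed[OF all[rule_format, OF j] bcL u(1)] .
          then show "w \<in> F ! j" using u m_comm[OF _ powc] Fcarr[OF j] by auto
        qed
        show "inj_on (\<lambda>u. u \<otimes> \<beta> [^] c) (F ! j)"
          by (rule inj_onI) (use m_rcancel[OF pownz powc] Fcarr[OF j] in auto)
      qed
      then show "Fm c ! j = F ! j" using Fm_nth[OF j] by simp
    qed
    then have "d dvd c" using stab_iff by simp
    then show "d = c" using cd by (simp add: dvd_antisym)
  qed
  have P3: "ts ! 0 = m" if dc: "d = c"
  proof -
    have all: "\<forall>j < length F. subalgebra L (F ! j) R" using P2 dc by simp
    have Fne: "F \<noteq> []" using i0F by auto
    then have "{\<zero>} \<subset> F ! 0" using flag unfolding is_flag_def by (simp add: hd_conv_nth)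
    then obtain v where v: "v \<in> F ! 0" "v \<noteq> \<zero>" by auto
    have F0: "0 < length F" using Fne by simp
    have vc: "v \<in> carrier R" using v Fcarr[OF F0] by auto
    have "card L \<le> card (F ! 0)"
    proof (rule card_inj_on_le[of "\<lambda>l. l \<otimes> v"])
      show "inj_on (\<lambda>l. l \<otimes> v) L"
        by (rule inj_onI) (use m_rcancel[OF v(2) vc] Lc in auto)
      show "(\<lambda>l. l \<otimes> v) ` L \<subseteq> F ! 0"
        using subalgebra.smult_closed[OF all[rule_format, OF F0] _ v(1)] by auto
      show "finite (F ! 0)" by (rule finF[OF F0])
    qed
    then have le1: "q ^ m \<le> q ^ (ts ! 0)" using card_L cardF[OF F0] by simp
    have chain: "F ! 0 \<subseteq> F ! i" if "i < length F" for i
      using that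
    proof (induct i)
      case 0 then show ?case by simp
    next
      case (Suc i)
      then have "F ! i \<subset> F ! Suc i" using flag unfolding is_flag_def by blast
      then show ?case using Suc by auto
    qed
    have "card (F ! 0) \<le> card (F ! i0)" using chain[OF i0F] finF[OF i0F] card_mono by blast
    then have le2: "q ^ (ts ! 0) \<le> q ^ m" using cardF[OF F0] cardF[OF i0F] i0 by simp
    have "q ^ (ts ! 0) = q ^ m" using le1 le2 by simp
    then show ?thesis using q2 power_inject_exp[of q] by simp
  qed
  show ?thesis
    using card_orb cd P2 P3 unfolding N_def[symmetric] e_def[symmetric] c_def[symmetric] by simp
qed

theorem proposition3p10:
  fixes R :: "('a, 'c) ring_scheme" and K L :: "'a set"
    and q n m :: nat and F :: "'a set list" and ts :: "nat list" and \<beta> :: 'a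
  assumes field_R: "field R"
    and fin: "finite (carrier R)"
    and q_pp: "\<exists>p k. Factorial_Ring.prime (p::nat) \<and> k > 0 \<and> q = p ^ k"
    and card_R: "card (carrier R) = q ^ n"
    and K_sub: "subfield K R" and card_K: "card K = q"
    and flag: "is_flag R K F ts"
    and m_dvd: "m dvd n"
    and m_type: "\<exists>i < length ts. ts ! i = m"
    and L_sub: "subfield L R" and card_L: "card L = q ^ m"
    and beta: "\<beta> \<in> carrier R" "\<beta> \<noteq> \<zero>\<^bsub>R\<^esub>"
    and gen: "L - {\<zero>\<^bsub>R\<^esub>} \<subseteq> {\<beta> [^]\<^bsub>R\<^esub> (k::nat) | k. True}"
  shows "elem_ord R \<beta> div (q ^ m - 1) dvd card (flag_orbit R \<beta> F)
         \<and> (card (flag_orbit R \<beta> F) = elem_ord R \<beta> div (q ^ m - 1)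
              \<longleftrightarrow> (\<forall>j < length F. subalgebra L (F ! j) R))
         \<and> (card (flag_orbit R \<beta> F) = elem_ord R \<beta> div (q ^ m - 1) \<longrightarrow> ts ! 0 = m)"
  by (rule field.main_prop[OF field_R fin K_sub card_K flag m_type L_sub card_L beta gen])

end
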